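(* Let $p$ be a prime number and $G$ a transitive group of degree $p$. Then $\#G^{\mathrm{ab}}$ is a multiple of $p$ if and only if $G\cong C_{p}$.
   Context: A transitive group of degree $p$ is a subgroup of $\mathfrak{S}_p$ acting transitively on $p$ points. $G^{\mathrm{ab}}:=G/[G,G]$ is the abelianization. *)

theory Defs
  imports "HOL-Algebra.Algebra"
begin

definition transitive_on_points :: "nat \<Rightarrow> (nat \<Rightarrow> nat) set \<Rightarrow> bool" where
  "transitive_on_points n H \<longleftrightarrow> (\<forall>i\<in>{1..n}. \<forall>j\<in>{1..n}. \<exists>\<sigma>\<in>H. \<sigma> i = j)"

definition abelianization :: "('a, 'b) monoid_scheme \<Rightarrow> 'a set monoid" where
  "abelianization G = G Mod (derived G (carrier G))"

end

theory Submission
  imports Defs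
begin

lemma perm_action:
  assumes "subgroup K (sym_group n)"
  shows "group_action ((sym_group n)\<lparr>carrier := K\<rparr>) {1..n} (\<lambda>\<sigma>. restrict \<sigma> {1..n})"
proof -
  have grp: "group ((sym_group n)\<lparr>carrier := K\<rparr>)"
    using subgroup.subgroup_is_group[OF assms sym_group_is_group] .
  have perm: "\<sigma> permutes {1..n}" if "\<sigma> \<in> K" for \<sigma>
    using subgroup.subset[OF assms] that sym_group_carrier by blast
  have bij: "restrict \<sigma> {1..n} \<in> Bij {1..n}" if "\<sigma> permutes {1..n}" for \<sigma>
    unfolding Bij_def using permutes_imp_bij[OF that] by simp
  have "(\<lambda>\<sigma>. restrict \<sigma> {1..n}) \<in> hom ((sym_group n)\<lparr>carrier := K\<rparr>) (BijGroup {1..n})"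
  proof (rule homI)
    fix \<sigma> assume "\<sigma> \<in> carrier ((sym_group n)\<lparr>carrier := K\<rparr>)"
    then have "\<sigma> permutes {1..n}" using perm by simp
    then show "restrict \<sigma> {1..n} \<in> carrier (BijGroup {1..n})"
      using bij unfolding BijGroup_def by simp
  next
    fix \<sigma> \<tau> assume a: "\<sigma> \<in> carrier ((sym_group n)\<lparr>carrier := K\<rparr>)" "\<tau> \<in> carrier ((sym_group n)\<lparr>carrier := K\<rparr>)"
    then have p: "\<sigma> permutes {1..n}" "\<tau> permutes {1..n}" using perm by auto
    have b: "restrict \<sigma> {1..n} \<in> Bij {1..n}" "restrict \<tau> {1..n} \<in> Bij {1..n}"
      using bij p by auto
    have m1: "\<sigma> \<otimes>\<^bsub>(sym_group n)\<lparr>carrier := K\<rparr>\<^esub> \<tau> = \<sigma> \<circ> \<tau>" by (simp add: sym_group_def)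
    have m2: "restrict \<sigma> {1..n} \<otimes>\<^bsub>BijGroup {1..n}\<^esub> restrict \<tau> {1..n} =
       compose {1..n} (restrict \<sigma> {1..n}) (restrict \<tau> {1..n})"
      using b unfolding BijGroup_def by simp
    have im: "\<tau> x \<in> {1..n}" if "x \<in> {1..n}" for x using permutes_in_image[OF p(2)] that by simp
    have m3: "restrict (\<sigma> \<circ> \<tau>) {1..n} = compose {1..n} (restrict \<sigma> {1..n}) (restrict \<tau> {1..n})"
    proof
      fix x show "restrict (\<sigma> \<circ> \<tau>) {1..n} x = compose {1..n} (restrict \<sigma> {1..n}) (restrict \<tau> {1..n}) x"
        using im[of x] unfolding compose_def restrict_def by simp
    qed
    show "restrict (\<sigma> \<otimes>\<^bsub>(sym_group n)\<lparr>carrier := K\<rparr>\<^esub> \<tau>) {1..n} =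
          restrict \<sigma> {1..n} \<otimes>\<^bsub>BijGroup {1..n}\<^esub> restrict \<tau> {1..n}"
      unfolding m1 m2 m3 ..
  qed
  then show ?thesis
    unfolding group_action_def group_hom_def group_hom_axioms_def
    using grp group_BijGroup by blast
qed

lemma normal_orbits:
  fixes p :: nat and H N :: "(nat \<Rightarrow> nat) set"
  assumes pr: "Factorial_Ring.prime p" and sH: "subgroup H (sym_group p)"
    and tr: "transitive_on_points p H"
    and nN: "N \<lhd> (sym_group p)\<lparr>carrier := H\<rparr>"
  shows "N = {id} \<or> p dvd card N"
proof -
  let ?G = "(sym_group p)\<lparr>carrier := H\<rparr>"
  let ?NG = "(sym_group p)\<lparr>carrier := N\<rparr>"
  interpret S: group "sym_group p" by (rule sym_group_is_group)
  interpret G: group ?G using subgroup.subgroup_is_group[OF sH sym_group_is_group] .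
  interpret NN: normal N ?G by (rule nN)
  have NH: "N \<subseteq> H" using NN.subset by simp
  have sN: "subgroup N (sym_group p)"
    using S.incl_subgroup[OF sH NN.subgroup_axioms] .
  interpret A: group_action ?NG "{1..p}" "\<lambda>\<sigma>. restrict \<sigma> {1..p}"
    by (rule perm_action[OF sN])
  have p1: "p > 1" using pr prime_gt_1_nat by blast
  have permH: "g permutes {1..p}" if "g \<in> H" for g
    using subgroup.subset[OF sH] that sym_group_carrier by blast
  have permN: "g permutes {1..p}" if "g \<in> N" for g using permH NH that by blast
  have multG: "x \<otimes>\<^bsub>?G\<^esub> y = x \<circ> y" for x y by (simp add: sym_group_def)
  have idN: "id \<in> N" using NN.one_closed by (simp add: sym_group_def)
  define orb where "orb x = (\<lambda>\<nu>. \<nu> x) ` N" for x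
  have o1: "orbit ?NG (\<lambda>\<sigma>. restrict \<sigma> {1..p}) x = orb x" if "x \<in> {1..p}" for x
    using that unfolding orbit_def orb_def by auto
  have o2: "g ` orb x = orb (g x)" if gH: "g \<in> H" for g x
  proof
    show "g ` orb x \<subseteq> orb (g x)"
    proof
      fix y assume "y \<in> g ` orb x"
      then obtain \<nu> where nu: "\<nu> \<in> N" "y = g (\<nu> x)" unfolding orb_def by auto
      have c: "g \<in> carrier ?G" "\<nu> \<in> carrier ?G" using gH nu(1) NH by auto
      define m where "m = g \<otimes>\<^bsub>?G\<^esub> \<nu> \<otimes>\<^bsub>?G\<^esub> inv\<^bsub>?G\<^esub> g"
      have mN: "m \<in> N" unfolding m_def by (rule NN.inv_op_closed2[OF c(1) nu(1)])
      have "m \<otimes>\<^bsub>?G\<^esub> g = (g \<otimes>\<^bsub>?G\<^esub> \<nu>) \<otimes>\<^bsub>?G\<^esub> (inv\<^bsub>?G\<^esub> g \<otimes>\<^bsub>?G\<^esub> g)"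
        unfolding m_def by (rule G.m_assoc[OF G.m_closed[OF c] G.inv_closed[OF c(1)] c(1)])
      also have "\<dots> = (g \<otimes>\<^bsub>?G\<^esub> \<nu>) \<otimes>\<^bsub>?G\<^esub> \<one>\<^bsub>?G\<^esub>" by (simp only: G.l_inv[OF c(1)])
      also have "\<dots> = g \<otimes>\<^bsub>?G\<^esub> \<nu>" using G.r_one[OF G.m_closed[OF c]] .
      finally have mg: "m \<circ> g = g \<circ> \<nu>" unfolding multG .
      have "m (g x) = g (\<nu> x)" using fun_cong[OF mg, of x] by (simp only: comp_apply)
      then show "y \<in> orb (g x)" using mN nu unfolding orb_def by (metis image_eqI)
    qed
  next
    show "orb (g x) \<subseteq> g ` orb x"
    proof
      fix y assume "y \<in> orb (g x)"
      then obtain \<mu> where mu: "\<mu> \<in> N" "y = \<mu> (g x)" unfolding orb_def by auto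
      have c: "g \<in> carrier ?G" "\<mu> \<in> carrier ?G" using gH mu(1) NH by auto
      define m where "m = inv\<^bsub>?G\<^esub> g \<otimes>\<^bsub>?G\<^esub> \<mu> \<otimes>\<^bsub>?G\<^esub> g"
      have mN: "m \<in> N" unfolding m_def by (rule NN.inv_op_closed1[OF c(1) mu(1)])
      have "g \<otimes>\<^bsub>?G\<^esub> m = g \<otimes>\<^bsub>?G\<^esub> (inv\<^bsub>?G\<^esub> g \<otimes>\<^bsub>?G\<^esub> (\<mu> \<otimes>\<^bsub>?G\<^esub> g))"
        unfolding m_def by (simp only: G.m_assoc[OF G.inv_closed[OF c(1)] c(2) c(1)])
      also have "\<dots> = (g \<otimes>\<^bsub>?G\<^esub> inv\<^bsub>?G\<^esub> g) \<otimes>\<^bsub>?G\<^esub> (\<mu> \<otimes>\<^bsub>?G\<^esub> g)"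
        by (rule G.m_assoc[OF c(1) G.inv_closed[OF c(1)] G.m_closed[OF c(2) c(1)], symmetric])
      also have "\<dots> = \<one>\<^bsub>?G\<^esub> \<otimes>\<^bsub>?G\<^esub> (\<mu> \<otimes>\<^bsub>?G\<^esub> g)" by (simp only: G.r_inv[OF c(1)])
      also have "\<dots> = \<mu> \<otimes>\<^bsub>?G\<^esub> g" using G.l_one[OF G.m_closed[OF c(2) c(1)]] .
      finally have gm: "g \<circ> m = \<mu> \<circ> g" unfolding multG .
      have "g (m x) = \<mu> (g x)" using fun_cong[OF gm, of x] by (simp only: comp_apply)
      then show "y \<in> g ` orb x" using mN mu unfolding orb_def by (metis image_eqI)
    qed
  qed
  have o3: "card (orb x) = card (orb 1)" if "x \<in> {1..p}" for x
  proof -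
    have one: "1 \<in> {1..p}" using p1 by simp
    have "\<exists>g\<in>H. g 1 = x" by (rule tr[unfolded transitive_on_points_def, rule_format, OF one that])
    then obtain g where g: "g \<in> H" "g 1 = x" by blast
    have "orb x = g ` orb 1" using o2[OF g(1)] g(2) by simp
    moreover have "inj_on g (orb 1)" using permutes_inj[OF permH[OF g(1)]] inj_on_subset by blast
    ultimately show ?thesis using card_image by metis
  qed
  have orbs: "orbits ?NG {1..p} (\<lambda>\<sigma>. restrict \<sigma> {1..p}) = orb ` {1..p}"
  proof -
    have "orbits ?NG {1..p} (\<lambda>\<sigma>. restrict \<sigma> {1..p}) = (\<lambda>x. orbit ?NG (\<lambda>\<sigma>. restrict \<sigma> {1..p}) x) ` {1..p}"
      unfolding orbits_def by (rule Setcompr_eq_image)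
    also have "\<dots> = orb ` {1..p}" by (rule image_cong[OF refl o1])
    finally show ?thesis .
  qed
  have f1: "finite (orb ` {1..p})" by simp
  have cov: "\<Union> (orb ` {1..p}) = {1..p}" using A.orbits_coverture unfolding orbs .
  have f2: "finite (\<Union> (orb ` {1..p}))" unfolding cov by simp
  have h3: "card c = card (orb 1)" if "c \<in> orb ` {1..p}" for c
  proof -
    obtain x where "x \<in> {1..p}" "c = orb x" using \<open>c \<in> orb ` {1..p}\<close> by blast
    then show ?thesis using o3 by metis
  qed
  have h4: "c1 \<inter> c2 = {}" if "c1 \<in> orb ` {1..p}" "c2 \<in> orb ` {1..p}" "c1 \<noteq> c2" for c1 c2
    using A.disjoint_union[of c1 c2] that unfolding orbs by blast
  have "card (orb 1) * card (orb ` {1..p}) = card (\<Union> (orb ` {1..p}))"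
    by (rule card_partition[OF f1 f2 h3 h4])
  also note cov
  finally have "card (orb 1) * card (orb ` {1..p}) = p" by simp
  then have kd: "card (orb 1) dvd p" by (metis dvd_triv_left)
  have "\<forall>m. m dvd p \<longrightarrow> m = 1 \<or> m = p" using pr unfolding prime_nat_iff by (elim conjE)
  then have "card (orb 1) = 1 \<or> card (orb 1) = p" using kd by blast
  then show ?thesis
  proof
    assume c1: "card (orb 1) = 1"
    have "\<nu> = id" if nu: "\<nu> \<in> N" for \<nu>
    proof
      fix x
      show "\<nu> x = id x"
      proof (cases "x \<in> {1..p}")
        case True
        have "card (orb x) = 1" using o3[OF True] c1 by (rule trans)
        then obtain a where "orb x = {a}" using card_1_singletonE by blast
        moreover have "x \<in> orb x" unfolding orb_def using idN by (metis id_apply image_eqI)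
        moreover have "\<nu> x \<in> orb x" unfolding orb_def using nu by (rule image_eqI[OF refl])
        ultimately show ?thesis by simp
      next
        case False
        then show ?thesis using permutes_not_in[OF permN[OF nu]] by simp
      qed
    qed
    then show ?thesis using idN by blast
  next
    assume cp: "card (orb 1) = p"
    have "1 \<in> {1..p}" using p1 by simp
    have "card (orbit ?NG (\<lambda>\<sigma>. restrict \<sigma> {1..p}) 1) * card (stabilizer ?NG (\<lambda>\<sigma>. restrict \<sigma> {1..p}) 1) = order ?NG"
      by (rule A.orbit_stabilizer_theorem[OF \<open>1 \<in> {1..p}\<close>])
    then have "p * card (stabilizer ?NG (\<lambda>\<sigma>. restrict \<sigma> {1..p}) 1) = card N"
      using o1 \<open>1 \<in> {1..p}\<close> cp by (simp add: order_def)
    then show ?thesis by (metis dvd_triv_left)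
  qed
qed

lemma abelian_transitive_iso:
  fixes p :: nat and H :: "(nat \<Rightarrow> nat) set"
  assumes pr: "Factorial_Ring.prime p" and sH: "subgroup H (sym_group p)"
    and tr: "transitive_on_points p H"
    and ab: "\<forall>x\<in>H. \<forall>y\<in>H. x \<circ> y = y \<circ> x"
  shows "(sym_group p)\<lparr>carrier := H\<rparr> \<cong> integer_mod_group p"
proof -
  let ?G = "(sym_group p)\<lparr>carrier := H\<rparr>"
  interpret G: group ?G using subgroup.subgroup_is_group[OF sH sym_group_is_group] .
  have p1: "p > 1" using pr prime_gt_1_nat by blast
  have one: "1 \<in> {1..p}" using p1 by simp
  have permH: "g permutes {1..p}" if "g \<in> H" for g
    using subgroup.subset[OF sH] that sym_group_carrier by blast
  have multG: "x \<otimes>\<^bsub>?G\<^esub> y = x \<circ> y" for x y by (simp add: sym_group_def)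
  have oneG: "\<one>\<^bsub>?G\<^esub> = id" by (simp add: sym_group_def)
  have bij: "bij_betw (\<lambda>\<sigma>. \<sigma> 1) H {1..p}"
  proof (rule bij_betw_imageI)
    show "inj_on (\<lambda>\<sigma>. \<sigma> 1) H"
    proof (rule inj_onI)
      fix \<sigma> \<tau> assume st: "\<sigma> \<in> H" "\<tau> \<in> H" "\<sigma> 1 = \<tau> 1"
      show "\<sigma> = \<tau>"
      proof
        fix x
        show "\<sigma> x = \<tau> x"
        proof (cases "x \<in> {1..p}")
          case True
          then obtain g where g: "g \<in> H" "g 1 = x" using tr one unfolding transitive_on_points_def by blast
          have "\<sigma> x = (\<sigma> \<circ> g) 1" using g by simp
          also have "\<dots> = (g \<circ> \<sigma>) 1" using ab g st by metis
          also have "\<dots> = (g \<circ> \<tau>) 1" using st by simp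
          also have "\<dots> = (\<tau> \<circ> g) 1" using ab g st by metis
          finally show ?thesis using g by simp
        next
          case False
          then show ?thesis using permutes_not_in[OF permH] st by metis
        qed
      qed
    qed
    show "(\<lambda>\<sigma>. \<sigma> 1) ` H = {1..p}"
    proof
      show "(\<lambda>\<sigma>. \<sigma> 1) ` H \<subseteq> {1..p}" using permH permutes_in_image one by (metis image_subsetI)
      show "{1..p} \<subseteq> (\<lambda>\<sigma>. \<sigma> 1) ` H"
      proof
        fix j assume "j \<in> {1..p}"
        then obtain \<sigma> where "\<sigma> \<in> H" "\<sigma> 1 = j" using tr one unfolding transitive_on_points_def by blast
        then show "j \<in> (\<lambda>\<sigma>. \<sigma> 1) ` H" by (metis image_eqI)
      qed
    qed
  qed
  have finH: "finite H"
    using finite_permutations[of "{1..p}"] permH by (metis finite_atLeastAtMost finite_subset mem_Collect_eq subsetI)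
  have cardH: "card H = p" using bij_betw_same_card[OF bij] by simp
  have "2 \<in> {1..p}" using p1 by simp
  then obtain \<sigma> where s: "\<sigma> \<in> H" "\<sigma> 1 = 2" using tr one unfolding transitive_on_points_def by blast
  have sc: "\<sigma> \<in> carrier ?G" using s by simp
  have "\<sigma> \<noteq> \<one>\<^bsub>?G\<^esub>" using s oneG by (metis id_apply numeral_One numeral_eq_iff semiring_norm(85))
  then have o1: "G.ord \<sigma> \<noteq> 1" using G.ord_eq_1[OF sc] by simp
  have "G.ord \<sigma> dvd p" using G.ord_dvd_group_order[OF sc] cardH by (simp add: order_def)
  then have ordp: "G.ord \<sigma> = p" using o1 pr prime_nat_iff by blast
  define h where "h k = \<sigma> [^]\<^bsub>?G\<^esub> (k::int)" for k
  have hc: "h k \<in> H" for k using G.int_pow_closed[OF sc] unfolding h_def by simp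
  have heq: "h a = h b \<longleftrightarrow> int p dvd (b - a)" for a b
    unfolding h_def using G.int_pow_eq[OF sc] ordp by simp
  have carZ: "carrier (integer_mod_group p) = {0..<int p}" using p1 by (simp add: carrier_integer_mod_group)
  have "h \<in> hom (integer_mod_group p) ?G"
  proof (rule homI)
    fix a show "a \<in> carrier (integer_mod_group p) \<Longrightarrow> h a \<in> carrier ?G" using hc by simp
  next
    fix a b
    have "h ((a + b) mod int p) = h (a + b)" unfolding heq by (simp add: mod_eq_dvd_iff)
    also have "\<dots> = h a \<otimes>\<^bsub>?G\<^esub> h b" unfolding h_def using G.int_pow_mult[OF sc] by simp
    finally show "h (a \<otimes>\<^bsub>integer_mod_group p\<^esub> b) = h a \<otimes>\<^bsub>?G\<^esub> h b" by simp
  qed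
  moreover have "bij_betw h (carrier (integer_mod_group p)) (carrier ?G)"
  proof -
    have inj: "inj_on h {0..<int p}"
    proof (rule inj_onI)
      fix a b assume ab: "a \<in> {0..<int p}" "b \<in> {0..<int p}" "h a = h b"
      then have "int p dvd (b - a)" using heq by simp
      then obtain k where k: "b - a = int p * k" by (meson dvdE)
      have "k = 0"
      proof (rule ccontr)
        assume "k \<noteq> 0"
        then have "\<bar>int p * k\<bar> \<ge> int p" using p1 by (simp add: abs_mult)
        then show False using ab k by auto
      qed
      then show "a = b" using k by simp
    qed
    have "h ` {0..<int p} \<subseteq> H" using hc by auto
    moreover have "card (h ` {0..<int p}) = card H" using card_image[OF inj] cardH by simp
    ultimately have "h ` {0..<int p} = H" using finH by (metis card_subset_eq)
    then show ?thesis using inj carZ by (simp add: bij_betw_def)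
  qed
  ultimately have "h \<in> iso (integer_mod_group p) ?G" by (simp add: iso_def)
  then have "integer_mod_group p \<cong> ?G" unfolding is_iso_def by blast
  then show ?thesis using group.iso_sym[OF group_integer_mod_group] by blast
qed

theorem lemma2p3:
  fixes p :: nat and H :: "(nat \<Rightarrow> nat) set"
  assumes "Factorial_Ring.prime p"
    and "subgroup H (sym_group p)"
    and "transitive_on_points p H"
  shows "p dvd order (abelianization ((sym_group p)\<lparr>carrier := H\<rparr>))
         \<longleftrightarrow> (sym_group p)\<lparr>carrier := H\<rparr> \<cong> integer_mod_group p"
proof -
  note pr = assms(1) and sH = assms(2) and tr = assms(3)
  let ?G = "(sym_group p)\<lparr>carrier := H\<rparr>"
  interpret S: group "sym_group p" by (rule sym_group_is_group)
  interpret G: group ?G using subgroup.subgroup_is_group[OF sH sym_group_is_group] .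
  define N where "N = derived ?G H"
  have ab: "abelianization ?G = ?G Mod N" unfolding abelianization_def N_def by simp
  have nN: "N \<lhd> ?G" unfolding N_def using G.derived_is_normal[OF G.normal_self] by simp
  have sN: "subgroup N ?G" using nN normal_imp_subgroup by blast
  have ordq: "order (?G Mod N) = card (rcosets\<^bsub>?G\<^esub> N)" by (simp add: FactGroup_def order_def)
  have lag: "card (rcosets\<^bsub>?G\<^esub> N) * card N = card H"
    using G.lagrange[OF sN] by (simp add: order_def)
  have lagS: "card (rcosets\<^bsub>sym_group p\<^esub> H) * card H = fact p"
    using S.lagrange[OF sH] sym_group_card_carrier by (simp add: order_def)
  have p1: "p > 1" using pr prime_gt_1_nat by blast
  show ?thesis
  proof
    assume pd: "p dvd order (abelianization ?G)"
    have "N = {id}"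
    proof -
      have "\<not> p dvd card N"
      proof
        assume "p dvd card N"
        moreover have "p dvd card (rcosets\<^bsub>?G\<^esub> N)" using pd ab ordq by simp
        ultimately have "p * p dvd card (rcosets\<^bsub>?G\<^esub> N) * card N"
          by (simp add: mult_dvd_mono)
        then have "p * p dvd card H" by (simp only: lag)
        moreover have "card H dvd fact p" using lagS dvd_triv_right by metis
        ultimately have "p * p dvd fact p" by (rule dvd_trans)
        moreover have "fact p = p * fact (p - 1)" using p1 by (cases p) auto
        ultimately have "p * p dvd p * fact (p - 1)" by simp
        then have "p dvd fact (p - 1)" using p1 by simp
        then show False using prime_dvd_fact_iff[OF pr] p1 by simp
      qed
      then show ?thesis using normal_orbits[OF pr sH tr nN] by blast
    qed
    have "\<forall>x\<in>H. \<forall>y\<in>H. x \<circ> y = y \<circ> x"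
    proof (intro ballI)
      fix x y assume xy: "x \<in> H" "y \<in> H"
      have "x \<otimes>\<^bsub>?G\<^esub> y \<otimes>\<^bsub>?G\<^esub> inv\<^bsub>?G\<^esub> x \<otimes>\<^bsub>?G\<^esub> inv\<^bsub>?G\<^esub> y \<in> N"
        unfolding N_def derived_def using xy by (blast intro: generate.incl)
      then have c: "x \<otimes>\<^bsub>?G\<^esub> y \<otimes>\<^bsub>?G\<^esub> inv\<^bsub>?G\<^esub> x \<otimes>\<^bsub>?G\<^esub> inv\<^bsub>?G\<^esub> y = \<one>\<^bsub>?G\<^esub>"
        using \<open>N = {id}\<close> by (simp add: sym_group_def)
      have xc: "x \<in> carrier ?G" "y \<in> carrier ?G" using xy by auto
      have "y = \<one>\<^bsub>?G\<^esub> \<otimes>\<^bsub>?G\<^esub> y" using G.l_one[OF xc(2)] by (rule sym)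
      also have "\<dots> = x \<otimes>\<^bsub>?G\<^esub> y \<otimes>\<^bsub>?G\<^esub> inv\<^bsub>?G\<^esub> x \<otimes>\<^bsub>?G\<^esub> inv\<^bsub>?G\<^esub> y \<otimes>\<^bsub>?G\<^esub> y"
        by (simp only: c)
      also have "\<dots> = x \<otimes>\<^bsub>?G\<^esub> y \<otimes>\<^bsub>?G\<^esub> inv\<^bsub>?G\<^esub> x"
        using xc by (metis G.m_assoc G.l_inv G.r_one G.m_closed G.inv_closed)
      finally have y1: "y = x \<otimes>\<^bsub>?G\<^esub> y \<otimes>\<^bsub>?G\<^esub> inv\<^bsub>?G\<^esub> x" .
      have "y \<otimes>\<^bsub>?G\<^esub> x = x \<otimes>\<^bsub>?G\<^esub> y \<otimes>\<^bsub>?G\<^esub> inv\<^bsub>?G\<^esub> x \<otimes>\<^bsub>?G\<^esub> x"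
        using y1 by simp
      also have "\<dots> = x \<otimes>\<^bsub>?G\<^esub> y" using xc by (metis G.m_assoc G.l_inv G.r_one G.m_closed G.inv_closed)
      finally have "x \<otimes>\<^bsub>?G\<^esub> y = y \<otimes>\<^bsub>?G\<^esub> x" by (rule sym)
      then show "x \<circ> y = y \<circ> x" by (simp add: sym_group_def)
    qed
    then show "?G \<cong> integer_mod_group p" using abelian_transitive_iso[OF pr sH tr] by blast
  next
    assume iso: "?G \<cong> integer_mod_group p"
    have cardH: "card H = p"
      using iso_same_card[OF iso] p1 by (simp add: carrier_integer_mod_group)
    have "integer_mod_group p \<cong> ?G" using G.iso_sym[OF iso] .
    then have cG: "comm_group ?G"
      using comm_group.iso_imp_comm_group[OF abelian_integer_mod_group] G.is_monoid by blast
    have "N = {\<one>\<^bsub>?G\<^esub>}" unfolding N_def using comm_group.derived_eq_singleton[OF cG] by simp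
    then have "card N = 1" by simp
    then show "p dvd order (abelianization ?G)" using lag cardH ab ordq by simp
  qed
qed


end
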